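(* Let $n\ge 2$, and let $l\ge1$, $\mu\ge 0$ be integers with $l+\mu\le n$. For $j=1,\dots,n-1$ put $b_j=-j/(n-j)$. Then the Schur–Szegő composition (of degree-$n$ polynomials) $$U:=\underbrace{(x+1)^{n-1}x*\cdots*(x+1)^{n-1}x}_{l\text{ factors}}*(x+1)^{n-1}(x+b_1)*\cdots*(x+1)^{n-1}(x+b_\mu)$$ is a polynomial with a root of multiplicity $\mu+1$ at $0$, a root of multiplicity $n-\mu-l$ at $-1$, and $l-1$ simple roots belonging to the interval $(-1,0)$.
   Context: Schur–Szegő composition of degree-$n$ polynomials: for $A=\sum_{j=0}^n\binom{n}{j}\alpha_jx^j$ and $B=\sum_{j=0}^n\binom{n}{j}\beta_jx^j$ one sets $A*B=\sum_{j=0}^n\binom{n}{j}\alpha_j\beta_jx^j$; it is commutative and associative, and the composition of several polynomials multiplies the corresponding coefficients. All polynomials are composed as degree-$n$ polynomials (the factor $(x+1)^{n-1}x$ has degree $n$). *)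

theory Defs
  imports "HOL-Computational_Algebra.Polynomial"
begin

text \<open>Schur-Szego composition of two polynomials, both regarded as degree-n polynomials:
  if A = sum_j (n choose j) alpha_j x^j and B = sum_j (n choose j) beta_j x^j then
  A * B = sum_j (n choose j) alpha_j beta_j x^j, i.e. the j-th coefficient is
  coeff A j * coeff B j / (n choose j).\<close>
definition ss_comp :: "nat \<Rightarrow> real poly \<Rightarrow> real poly \<Rightarrow> real poly" where
  "ss_comp n A B = (\<Sum>j\<le>n. monom (coeff A j * coeff B j / real (n choose j)) j)"

text \<open>Composition of a list of degree-n polynomials; the neutral element is (x+1)^n
  (all alpha_j = 1).\<close>
definition ss_comp_list :: "nat \<Rightarrow> real poly list \<Rightarrow> real poly" where
  "ss_comp_list n ps = foldr (ss_comp n) ps ([:1, 1:] ^ n)"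

definition bcoef :: "nat \<Rightarrow> nat \<Rightarrow> real" where
  "bcoef n j = - real j / (real n - real j)"

definition ss_factor :: "nat \<Rightarrow> real \<Rightarrow> real poly" where
  "ss_factor n b = [:1, 1:] ^ (n - 1) * [:b, 1:]"

end

theory Submission imports Defs begin

lemma coeff_lin_pow: "coeff ([:1,1:]^n :: real poly) i = real (n choose i)"
proof (cases "i \<le> n")
  case True thus ?thesis by (simp add: coeff_linear_poly_power)
next
  case False
  have "degree ([:1,1:]^n :: real poly) = n" by (simp add: degree_linear_power)
  hence "degree ([:1,1:]^n :: real poly) < i" using False by simp
  thus ?thesis using False by (simp add: coeff_eq_0)
qed

lemma coeff_ss_comp: "coeff (ss_comp n A B) j = (if j \<le> n then coeff A j * coeff B j / real (n choose j) else 0)"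
  unfolding ss_comp_def by (simp add: coeff_sum coeff_monom)

lemma coeff_ss_comp_list: "coeff (ss_comp_list n ps) j =
   (if j \<le> n then real (n choose j) * (\<Prod>p\<leftarrow>ps. coeff p j / real (n choose j)) else 0)"
proof (induction ps)
  case Nil thus ?case by (simp add: ss_comp_list_def coeff_lin_pow)
next
  case (Cons p ps)
  have "ss_comp_list n (p # ps) = ss_comp n p (ss_comp_list n ps)" by (simp add: ss_comp_list_def)
  thus ?case using Cons by (simp add: coeff_ss_comp)
qed

lemma coeff_ss_factor:
  assumes "n \<ge> 1" "j \<le> n"
  shows "coeff (ss_factor n b) j / real (n choose j) = (real j + b * (real n - real j)) / real n"
proof -
  have c: "coeff (ss_factor n b) j = b * real ((n-1) choose j) + (if j = 0 then 0 else real ((n-1) choose (j-1)))"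
    unfolding ss_factor_def by (cases j) (simp_all add: coeff_lin_pow)
  have e1: "real n * real ((n-1) choose j) = (real n - real j) * real (n choose j)"
    using binomial_absorb_comp[of n j] assms by (metis of_nat_diff of_nat_mult)
  have e2: "j > 0 \<Longrightarrow> real n * real ((n-1) choose (j-1)) = real j * real (n choose j)"
    using times_binomial_minus1_eq[of j n] by (metis of_nat_mult)
  have nz: "real (n choose j) \<noteq> 0" using assms by simp
  have "real n > 0" using assms by simp
  have "real n * coeff (ss_factor n b) j = (real j + b * (real n - real j)) * real (n choose j)"
  proof (cases "j = 0")
    case True thus ?thesis using c e1 by simp
  next
    case False
    hence "real n * coeff (ss_factor n b) j = b * (real n * real ((n-1) choose j)) + real n * real ((n-1) choose (j-1))"
      using c by (simp add: algebra_simps)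
    also have "\<dots> = b * ((real n - real j) * real (n choose j)) + real j * real (n choose j)"
      by (subst e1, subst e2) (use False in auto)
    also have "\<dots> = (real j + b * (real n - real j)) * real (n choose j)" by (simp add: algebra_simps)
    finally show ?thesis .
  qed
  thus ?thesis using nz \<open>real n > 0\<close> by (simp add: field_simps)
qed


definition P0 :: "nat \<Rightarrow> nat \<Rightarrow> real poly" where
  "P0 s m = monom 1 s * [:1,1:]^m"

definition Pk :: "nat \<Rightarrow> nat \<Rightarrow> nat \<Rightarrow> real poly" where
  "Pk s m k = ((\<lambda>p. [:0,1:] * pderiv p) ^^ k) (P0 s m)"

lemma Pk_Suc: "Pk s m (Suc k) = [:0,1:] * pderiv (Pk s m k)"
  by (simp add: Pk_def)

lemma coeff_x_mult: "coeff ([:0,1:] * (q::real poly)) j = (if j = 0 then 0 else coeff q (j - 1))"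
  by (cases j) (simp_all add: coeff_pCons)

lemma coeff_Pk: "coeff (Pk s m k) j = real j ^ k * (if s \<le> j then real (m choose (j - s)) else 0)"
proof (induction k arbitrary: j)
  case 0
  thus ?case by (simp add: Pk_def P0_def coeff_monom_mult coeff_lin_pow)
next
  case (Suc k)
  show ?case
  proof (cases j)
    case 0 thus ?thesis by (simp add: Pk_Suc coeff_x_mult)
  next
    case (Suc i)
    thus ?thesis using Suc.IH[of j] by (simp add: Pk_Suc coeff_x_mult coeff_pderiv)
  qed
qed

lemma Pk_nz: "s \<ge> 1 \<Longrightarrow> Pk s m k \<noteq> 0"
proof
  assume "s \<ge> 1" "Pk s m k = 0"
  hence "coeff (Pk s m k) s = 0" by simp
  thus False using \<open>s \<ge> 1\<close> by (simp add: coeff_Pk)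
qed

lemma Pk_degree: "degree (Pk s m k) \<le> m + s"
  by (rule degree_le) (auto simp: coeff_Pk)

lemma order_x: "order 0 ([:0,1:] :: real poly) = 1"
  using order_power_n_n[of "0::real" 1] by simp

lemma order_x_m1: "order (-1) ([:0,1:] :: real poly) = 0"
  by (rule order_0I) simp

lemma Pk_roots:
  assumes "s \<ge> 1" "k \<le> m"
  shows "order 0 (Pk s m k) = s \<and> order (-1) (Pk s m k) = m - k \<and>
     (\<exists>S. S \<subseteq> {-1<..<0} \<and> finite S \<and> card S = k \<and> (\<forall>x\<in>S. poly (Pk s m k) x = 0))"
  using assms(2)
proof (induction k)
  case 0
  have x1: "order 0 ([:0,1:]^s :: real poly) = s" using order_power_n_n[of "0::real" s] by simp
  have x2: "order (-1) ([:1,1:]^m :: real poly) = m" using order_power_n_n[of "-1::real" m] by simp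
  have "order 0 (Pk s m 0) = order 0 ([:0,1:]^s :: real poly) + order 0 ([:1,1:]^m :: real poly)"
    by (simp add: Pk_def P0_def order_mult monom_altdef)
  also have "order 0 ([:1,1:]^m :: real poly) = 0" by (rule order_0I) simp
  finally have o1: "order 0 (Pk s m 0) = s" using x1 by simp
  have "order (-1) (Pk s m 0) = order (-1) ([:0,1:]^s :: real poly) + order (-1) ([:1,1:]^m :: real poly)"
    by (simp add: Pk_def P0_def order_mult monom_altdef)
  also have "order (-1) ([:0,1:]^s :: real poly) = 0" by (rule order_0I) simp
  finally have o2: "order (-1) (Pk s m 0) = m" using x2 by simp
  show ?case using o1 o2 by (intro conjI exI[of _ "{}"]) auto
next
  case (Suc k)
  define p where "p = Pk s m k"
  define q where "q = pderiv p"
  have IH: "order 0 p = s" "order (-1) p = m - k" and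
    ex: "\<exists>S. S \<subseteq> {-1<..<0} \<and> finite S \<and> card S = k \<and> (\<forall>x\<in>S. poly p x = 0)"
    using Suc p_def by auto
  have pnz: "p \<noteq> 0" using Pk_nz assms(1) p_def by auto
  have Pn: "Pk s m (Suc k) = [:0,1:] * q" by (simp add: Pk_Suc p_def q_def)
  have Pnz: "[:0,1:] * q \<noteq> 0" using Pk_nz[OF assms(1)] Pn by metis
  hence qnz: "q \<noteq> 0" by auto
  have r0: "poly p 0 = 0" using IH(1) assms(1) order_root by force
  have rm1: "poly p (-1) = 0" using IH(2) Suc.prems order_root by force
  have oq0: "order 0 p = Suc (order 0 q)" using order_pderiv[OF pnz r0] q_def by simp
  have oqm1: "order (-1) p = Suc (order (-1) q)" using order_pderiv[OF pnz rm1] q_def by simp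
  have A1: "order 0 (Pk s m (Suc k)) = s" using Pn Pnz order_mult[OF Pnz, of 0] order_x oq0 IH(1) by simp
  have A2: "order (-1) (Pk s m (Suc k)) = m - Suc k" using Pn Pnz order_mult[OF Pnz, of "-1"] order_x_m1 oqm1 IH(2) by simp
  obtain S where S: "S \<subseteq> {-1<..<0}" "finite S" "card S = k" "\<forall>x\<in>S. poly p x = 0" using ex by blast
  define A where "A = insert (-1) S"
  define B where "B = insert 0 S"
  define nxt where "nxt x = Min {y\<in>B. y > x}" for x :: real
  have finB: "finite B" using S B_def by simp
  have rootsB: "\<forall>y\<in>B. poly p y = 0" using S(4) r0 B_def by auto
  have Arange: "\<forall>x\<in>A. -1 \<le> x \<and> x < 0" using S(1) A_def by auto
  have nxt: "nxt x \<in> B \<and> x < nxt x \<and> (\<forall>y\<in>B. y > x \<longrightarrow> nxt x \<le> y)" if "x \<in> A" for x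
  proof -
    have f: "finite {y\<in>B. y > x}" using finB by simp
    have ne: "0 \<in> {y\<in>B. y > x}" using Arange that B_def by auto
    show ?thesis using Min_in[OF f] Min_le[OF f] ne unfolding nxt_def by blast
  qed
  have rolle: "\<forall>x\<in>A. \<exists>z. x < z \<and> z < nxt x \<and> poly q z = 0"
  proof
    fix x assume xA: "x \<in> A"
    have lt: "x < nxt x" using nxt[OF xA] by blast
    have eq: "poly p x = poly p (nxt x)"
    proof -
      have "poly p x = 0" using xA A_def S(4) rm1 by auto
      moreover have "poly p (nxt x) = 0" using nxt[OF xA] rootsB by blast
      ultimately show ?thesis by simp
    qed
    have der: "\<And>t. (poly p has_derivative (\<lambda>v. poly q t * v)) (at t)"
      using poly_DERIV[of p] q_def by (simp add: has_field_derivative_def)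
    have cont: "continuous_on {x..nxt x} (poly p)" by (intro continuous_intros)
    obtain z where z: "x < z" "z < nxt x" "(\<lambda>v. poly q z * v) = (\<lambda>v. 0)"
      using Rolle_deriv[OF lt eq cont, of "\<lambda>t v. poly q t * v"] der by blast
    have "poly q z = 0" using fun_cong[OF z(3), of 1] by simp
    thus "\<exists>z. x < z \<and> z < nxt x \<and> poly q z = 0" using z by blast
  qed
  then obtain Z where Z: "\<forall>x\<in>A. x < Z x \<and> Z x < nxt x \<and> poly q (Z x) = 0"
    by metis
  have inj: "inj_on Z A"
  proof (rule inj_onI)
    have key: "Z x < Z x'" if "x \<in> A" "x' \<in> A" "x < x'" for x x'
    proof -
      have "x' \<noteq> -1" using that Arange by force
      hence "x' \<in> B" using that A_def B_def by auto
      hence "nxt x \<le> x'" using nxt[OF that(1)] that(3) by blast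
      moreover have "Z x < nxt x" "x' < Z x'" using Z that(1,2) by auto
      ultimately show ?thesis by linarith
    qed
    fix x x' assume "x \<in> A" "x' \<in> A" "Z x = Z x'"
    thus "x = x'" using key by (metis less_irrefl linorder_neqE_linordered_idom)
  qed
  have "-1 \<notin> S" using S(1) by auto
  hence cardA: "card A = Suc k" using S A_def by simp
  have "Z ` A \<subseteq> {-1<..<0}"
  proof
    fix y assume "y \<in> Z ` A"
    then obtain x where x: "x \<in> A" "y = Z x" by blast
    have "nxt x \<le> 0" using nxt[OF x(1)] B_def Arange x(1) by auto
    thus "y \<in> {-1<..<0}" using Z x Arange by force
  qed
  moreover have "finite (Z ` A)" using S A_def by simp
  moreover have "card (Z ` A) = Suc k" using card_image[OF inj] cardA by simp
  moreover have "\<forall>y\<in>Z ` A. poly (Pk s m (Suc k)) y = 0" using Z Pn by auto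
  ultimately show ?case using A1 A2 by blast
qed

lemma sum_order_le:
  fixes P :: "real poly"
  assumes "P \<noteq> 0" "finite F"
  shows "(\<Sum>x\<in>F. order x P) \<le> degree P"
proof -
  let ?R = "{x. poly P x = 0}"
  have fR: "finite ?R" using poly_roots_finite[OF assms(1)] .
  have "(\<Sum>x\<in>F. order x P) = (\<Sum>x\<in>F \<inter> ?R. order x P)"
    by (rule sum.mono_neutral_right) (use assms in \<open>auto simp: order_root\<close>)
  also have "\<dots> \<le> (\<Sum>x\<in>?R. order x P)" by (rule sum_mono2[OF fR]) auto
  also have "\<dots> \<le> degree P" by (rule sum_order_le_degree[OF assms(1)])
  finally show ?thesis .
qed

lemma sum_order_ge_card:
  fixes P :: "real poly"
  assumes "P \<noteq> 0" "\<forall>x\<in>S. poly P x = 0"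
  shows "card S \<le> (\<Sum>x\<in>S. order x P)"
proof -
  have "card S = (\<Sum>x\<in>S. 1)" by simp
  also have "\<dots> \<le> (\<Sum>x\<in>S. order x P)"
    by (rule sum_mono) (use assms order_root in \<open>force\<close>)
  finally show ?thesis .
qed

lemma root_count:
  fixes P :: "real poly"
  assumes "P \<noteq> 0" "degree P \<le> a + b + card S" "order 0 P = a" "order (-1) P = b"
    "S \<subseteq> {-1<..<0}" "finite S" "\<forall>x\<in>S. poly P x = 0"
  shows "{x. -1<x \<and> x<0 \<and> poly P x = 0} = S \<and> (\<forall>x. -1<x \<and> x<0 \<and> poly P x = 0 \<longrightarrow> order x P = 1)"
proof -
  have base: "(\<Sum>x\<in>insert 0 (insert (-1) T). order x P) = a + b + (\<Sum>x\<in>T. order x P)"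
    if "T \<subseteq> {-1<..<0}" "finite T" for T
  proof -
    have "0 \<notin> insert (-1) T" "-1 \<notin> T" using that by auto
    thus ?thesis using that assms(3,4) by simp
  qed
  have inS: "x \<in> S" if x: "-1<x" "x<0" "poly P x = 0" for x
  proof (rule ccontr)
    assume "x \<notin> S"
    have T: "insert x S \<subseteq> {-1<..<0}" "finite (insert x S)" using x assms by auto
    have "card (insert x S) \<le> (\<Sum>y\<in>insert x S. order y P)"
      by (rule sum_order_ge_card) (use assms x in auto)
    hence "a + b + card (insert x S) \<le> degree P"
      using sum_order_le[OF assms(1), of "insert 0 (insert (-1) (insert x S))"] base[OF T] T by simp
    thus False using \<open>x \<notin> S\<close> assms(2,6) by simp
  qed
  have o1: "order x P = 1" if x: "x \<in> S" for x
  proof (rule ccontr)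
    assume ne: "order x P \<noteq> 1"
    have "order x P \<noteq> 0" using x assms(1,7) order_root by blast
    hence ge: "order x P \<ge> 2" using ne by linarith
    have "card (S - {x}) \<le> (\<Sum>y\<in>S-{x}. order y P)"
      by (rule sum_order_ge_card) (use assms in auto)
    moreover have "(\<Sum>y\<in>S. order y P) = order x P + (\<Sum>y\<in>S-{x}. order y P)"
      using x assms(6) by (simp add: sum.remove)
    moreover have "card S = Suc (card (S - {x}))" using x assms(6)
      by (metis card_Suc_Diff1)
    ultimately have "card S + 1 \<le> (\<Sum>y\<in>S. order y P)" using ge by linarith
    hence "a + b + card S + 1 \<le> degree P"
      using sum_order_le[OF assms(1), of "insert 0 (insert (-1) S)"] base[OF assms(5,6)] assms(6) by simp
    thus False using assms(2) by simp
  qed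
  show ?thesis using inS o1 assms(5,7) by auto
qed

lemma fact_split: "t \<le> a \<Longrightarrow> fact a = (\<Prod>k<t. a - k) * (fact (a - t) :: nat)"
proof (induction t)
  case 0 thus ?case by simp
next
  case (Suc t)
  have "a - t = Suc (a - Suc t)" using Suc.prems by simp
  hence "fact (a - t) = (a - t) * (fact (a - Suc t) :: nat)" by simp
  thus ?case using Suc by (simp add: mult.assoc)
qed

lemma nat_ident:
  assumes "1 \<le> s" "s \<le> j" "j \<le> n"
  shows "(n choose j) * (\<Prod>k<s. j - k) = ((n - s) choose (j - s)) * (\<Prod>k<s. n - k)"
proof -
  define i where "i = j - s"
  define m where "m = n - s"
  have im: "i \<le> m" "m - i = n - j" using assms unfolding i_def m_def by auto
  have fj: "fact j = (\<Prod>k<s. j - k) * (fact i :: nat)" using fact_split[of s j] assms i_def by simp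
  have fn: "fact n = (\<Prod>k<s. n - k) * (fact m :: nat)" using fact_split[of s n] assms m_def by simp
  have L: "(n choose j) * (\<Prod>k<s. j - k) * (fact i * fact (m - i)) = fact n"
    using binomial_fact_lemma[of j n] assms fj im by (simp add: algebra_simps)
  have R: "(m choose i) * (\<Prod>k<s. n - k) * (fact i * fact (m - i)) = fact n"
    using binomial_fact_lemma[of i m] im fn by (simp add: algebra_simps)
  have nz: "fact i * fact (m - i) \<noteq> (0::nat)" by simp
  show ?thesis using L R nz unfolding i_def[symmetric] m_def[symmetric]
    by (metis mult_right_cancel)
qed

lemma nat_ident2:
  assumes "1 \<le> s" "s \<le> j" "j \<le> n"
  shows "real (n choose j) * real j * (\<Prod>k\<in>{1..<s}. real j - real k)
       = real ((n - s) choose (j - s)) * real n * (\<Prod>k\<in>{1..<s}. real n - real k)"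
proof -
  have sp: "(\<Prod>k<s. a - k) = a * (\<Prod>k\<in>{1..<s}. a - k)" for a :: nat
    using prod.atLeast_Suc_lessThan[of 0 s "\<lambda>k. a - k"] assms by (simp add: atLeast0LessThan)
  have cv: "real (\<Prod>k\<in>{1..<s}. a - k) = (\<Prod>k\<in>{1..<s}. real a - real k)" if "s \<le> a" for a :: nat
    using that by (simp add: of_nat_prod of_nat_diff)
  have "(n choose j) * j * (\<Prod>k\<in>{1..<s}. j - k) = ((n - s) choose (j - s)) * n * (\<Prod>k\<in>{1..<s}. n - k)"
    using nat_ident[OF assms] sp by (simp add: mult.assoc)
  hence "real ((n choose j) * j * (\<Prod>k\<in>{1..<s}. j - k)) = real (((n - s) choose (j - s)) * n * (\<Prod>k\<in>{1..<s}. n - k))"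
    by simp
  thus ?thesis using cv[of j] cv[of n] assms by (simp only: of_nat_mult)
qed

lemma coeff_U:
  fixes n l \<mu> :: nat
  assumes "n \<ge> 2" "l \<ge> 1" "l + \<mu> \<le> n" "j \<le> n"
  shows "coeff (ss_comp_list n (replicate l (ss_factor n 0)
                   @ map (\<lambda>j. ss_factor n (bcoef n j)) [1..<\<mu> + 1])) j
    = real (n choose j) * ((real j / real n) ^ l * (\<Prod>k\<in>{1..<\<mu>+1}. (real j - real k) / (real n - real k)))"
proof -
  define g where "g p = coeff p j / real (n choose j)" for p
  have g0: "g (ss_factor n 0) = real j / real n" using coeff_ss_factor[of n j 0] assms g_def by simp
  have gk: "g (ss_factor n (bcoef n k)) = (real j - real k) / (real n - real k)" if "k \<in> {1..<\<mu>+1}" for k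
  proof -
    have nk: "real n - real k > 0" using that assms by auto
    have "g (ss_factor n (bcoef n k)) = (real j + bcoef n k * (real n - real j)) / real n"
      using coeff_ss_factor[of n j] assms g_def by simp
    also have "\<dots> = (real j - real k) / (real n - real k)"
      using nk assms unfolding bcoef_def by (simp add: field_simps)
    finally show ?thesis .
  qed
  have "prod_list (map g (map (\<lambda>j. ss_factor n (bcoef n j)) [1..<\<mu> + 1]))
       = (\<Prod>k\<in>{1..<\<mu>+1}. g (ss_factor n (bcoef n k)))"
    using prod.distinct_set_conv_list[of "[1..<\<mu>+1]" "\<lambda>k. g (ss_factor n (bcoef n k))"]
    by (simp add: o_def del: upt_Suc)
  also have "\<dots> = (\<Prod>k\<in>{1..<\<mu>+1}. (real j - real k) / (real n - real k))"
    by (rule prod.cong) (use gk in auto)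
  finally have pm: "prod_list (map g (map (\<lambda>j. ss_factor n (bcoef n j)) [1..<\<mu> + 1]))
       = (\<Prod>k\<in>{1..<\<mu>+1}. (real j - real k) / (real n - real k))" .
  have e: "(\<lambda>p. coeff p j / real (n choose j)) = g" by (simp add: g_def fun_eq_iff)
  have "coeff (ss_comp_list n (replicate l (ss_factor n 0)
                   @ map (\<lambda>j. ss_factor n (bcoef n j)) [1..<\<mu> + 1])) j
     = real (n choose j) * prod_list (map g (replicate l (ss_factor n 0)
                   @ map (\<lambda>j. ss_factor n (bcoef n j)) [1..<\<mu> + 1]))"
    unfolding coeff_ss_comp_list e if_P[OF assms(4)] ..
  also have "\<dots> = real (n choose j) * ((g (ss_factor n 0)) ^ l * prod_list (map g (map (\<lambda>j. ss_factor n (bcoef n j)) [1..<\<mu> + 1])))"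
    by (simp only: map_append prod_list.append map_replicate prod_list_replicate)
  finally show ?thesis unfolding g0 pm .
qed

theorem proposition4p1:
  fixes n l \<mu> :: nat
  assumes "n \<ge> 2" and "l \<ge> 1" and "l + \<mu> \<le> n"
  defines "U \<equiv> ss_comp_list n (replicate l (ss_factor n 0)
                   @ map (\<lambda>j. ss_factor n (bcoef n j)) [1..<\<mu> + 1])"
  shows "U \<noteq> 0
    \<and> order 0 U = \<mu> + 1
    \<and> order (-1) U = n - \<mu> - l
    \<and> card {x::real. -1 < x \<and> x < 0 \<and> poly U x = 0} = l - 1
    \<and> (\<forall>x::real. -1 < x \<and> x < 0 \<and> poly U x = 0 \<longrightarrow> order x U = 1)"
proof -
  define s where "s = \<mu> + 1"
  define m where "m = n - s"
  define k where "k = l - 1"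
  define c :: real where "c = 1 / real n ^ k"
  have s1: "s \<ge> 1" and km: "k \<le> m" and cnz: "c \<noteq> 0" using assms unfolding s_def m_def k_def c_def by auto
  have Ueq: "U = smult c (Pk s m k)"
  proof (rule poly_eqI)
    fix j
    show "coeff U j = coeff (smult c (Pk s m k)) j"
    proof (cases "j \<le> n")
      case False
      hence "coeff U j = 0" unfolding U_def coeff_ss_comp_list by simp
      moreover have "m < j - s" using False assms unfolding m_def s_def by auto
      ultimately show ?thesis by (simp add: coeff_Pk)
    next
      case jn: True
      have CU: "coeff U j = real (n choose j) * ((real j / real n) ^ l * (\<Prod>k\<in>{1..<s}. (real j - real k) / (real n - real k)))"
        unfolding U_def s_def using coeff_U[OF assms(1-3) jn] by simp
      show ?thesis
      proof (cases "s \<le> j")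
        case False
        have "coeff U j = 0"
        proof (cases "j = 0")
          case True thus ?thesis using CU assms(2) by simp
        next
          case False
          hence "j \<in> {1..<s}" using \<open>\<not> s \<le> j\<close> by auto
          hence "(\<Prod>k\<in>{1..<s}. (real j - real k) / (real n - real k)) = 0"
            by (intro prod_zero) auto
          thus ?thesis using CU by simp
        qed
        thus ?thesis using False by (simp add: coeff_Pk)
      next
        case True
        have N: "real (n choose j) * real j * (\<Prod>k\<in>{1..<s}. real j - real k)
          = real (m choose (j - s)) * real n * (\<Prod>k\<in>{1..<s}. real n - real k)"
          using nat_ident2[OF s1 True jn] m_def by simp
        have Pn: "(\<Prod>k\<in>{1..<s}. real n - real k) \<noteq> 0"
          using assms unfolding s_def by (auto simp: prod_zero_iff)
        have nz: "real n \<noteq> 0" using assms by simp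
        have l': "l = Suc k" using assms k_def by simp
        have "coeff U j = real (n choose j) * ((real j / real n) ^ l * ((\<Prod>k\<in>{1..<s}. real j - real k) / (\<Prod>k\<in>{1..<s}. real n - real k)))"
          using CU by (simp add: prod_dividef)
        also have "\<dots> = (real j ^ k / real n ^ k) * ((real (n choose j) * real j * (\<Prod>k\<in>{1..<s}. real j - real k)) / (real n * (\<Prod>k\<in>{1..<s}. real n - real k)))"
          unfolding l' by (simp add: power_divide field_simps)
        also have "\<dots> = (real j ^ k / real n ^ k) * real (m choose (j - s))"
          unfolding N using Pn nz by simp
        also have "\<dots> = coeff (smult c (Pk s m k)) j"
          using True by (simp add: coeff_Pk c_def)
        finally show ?thesis .
      qed
    qed
  qed
  have Pnz: "Pk s m k \<noteq> 0" using Pk_nz[OF s1] .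
  obtain S where R: "order 0 (Pk s m k) = s" "order (-1) (Pk s m k) = m - k"
    "S \<subseteq> {-1<..<0}" "finite S" "card S = k" "\<forall>x\<in>S. poly (Pk s m k) x = 0"
    using Pk_roots[OF s1 km] by blast
  have deg: "degree (Pk s m k) \<le> s + (m - k) + card S" using Pk_degree[of s m k] km R(5) by simp
  have RC: "{x. -1<x \<and> x<0 \<and> poly (Pk s m k) x = 0} = S \<and>
      (\<forall>x. -1<x \<and> x<0 \<and> poly (Pk s m k) x = 0 \<longrightarrow> order x (Pk s m k) = 1)"
    by (rule root_count[OF Pnz deg R(1,2,3,4,6)])
  have pU: "poly U x = 0 \<longleftrightarrow> poly (Pk s m k) x = 0" for x using Ueq cnz by simp
  have oU: "order x U = order x (Pk s m k)" for x using Ueq cnz order_smult by simp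
  show ?thesis
  proof (intro conjI)
    show "U \<noteq> 0" using Ueq cnz Pnz by simp
    show "order 0 U = \<mu> + 1" using oU R(1) s_def by simp
    show "order (-1) U = n - \<mu> - l" using oU R(2) assms unfolding m_def k_def s_def by simp
    show "card {x::real. -1 < x \<and> x < 0 \<and> poly U x = 0} = l - 1"
      using RC R(5) k_def pU by simp
    show "\<forall>x::real. -1 < x \<and> x < 0 \<and> poly U x = 0 \<longrightarrow> order x U = 1"
      using RC pU oU by simp
  qed
qed

end
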